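(* Let $f:(0,\infty)\to(0,\infty)$ be a $C^\infty(0,\infty)$-function such that $f'$ is a Bernstein function and $f^{(n)}(x)\neq0$ for all $x>0$ and $n\in\mathbb{N}$. Then its inverse $f^{-1}$ is a Bernstein function with $(f^{-1})^{(n)}(x)\neq0$ for all $x>0$ and $n\in\mathbb{N}$.
   Context: A Bernstein function is a non-negative function $g$ of class $C^\infty(0,\infty)$ with $(-1)^{n-1}g^{(n)}(x)\ge0$ for all $n\in\mathbb{N}$ and $x>0$. (Under the hypotheses $f'>0$, so $f$ is strictly increasing and invertible onto its image.) *)

theory Defs
  imports "HOL-Analysis.Analysis"
begin

definition smooth_on :: "real set \<Rightarrow> (real \<Rightarrow> real) \<Rightarrow> bool" where
  "smooth_on S g \<longleftrightarrow>
     (\<forall>n x. x \<in> S \<longrightarrow> ((deriv ^^ n) g has_real_derivative (deriv ^^ Suc n) g x) (at x))"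

definition bernstein_on :: "real set \<Rightarrow> (real \<Rightarrow> real) \<Rightarrow> bool" where
  "bernstein_on S g \<longleftrightarrow> smooth_on S g \<and> (\<forall>x\<in>S. 0 \<le> g x) \<and>
     (\<forall>n::nat. n \<ge> 1 \<longrightarrow> (\<forall>x\<in>S. 0 \<le> (-1) ^ (n - 1) * (deriv ^^ n) g x))"

definition bernstein :: "(real \<Rightarrow> real) \<Rightarrow> bool" where
  "bernstein g \<longleftrightarrow> bernstein_on {0<..} g"

end

theory Submission
  imports Defs "HOL-Complex_Analysis.Complex_Analysis"
begin

definition sm :: "nat \<Rightarrow> real set \<Rightarrow> (real \<Rightarrow> real) \<Rightarrow> bool" where
  "sm n S w \<longleftrightarrow> (\<forall>k\<le>n. \<forall>x\<in>S. ((deriv^^k) w has_real_derivative (deriv^^Suc k) w x) (at x))"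

lemma smooth_sm: "smooth_on S w \<longleftrightarrow> (\<forall>n. sm n S w)"
  unfolding smooth_on_def sm_def by blast

lemma sm_mono: "sm n S w \<Longrightarrow> k \<le> n \<Longrightarrow> sm k S w"
  unfolding sm_def by auto

lemma pow_deriv: "(deriv^^k) (deriv u) = (deriv^^(Suc k)) u"
  by (simp only: funpow_Suc_right o_apply)

lemma sm_Suc_iff: "sm (Suc n) S u \<longleftrightarrow> sm 0 S u \<and> sm n S (deriv u)"
proof -
  have gen: "(\<forall>k\<le>Suc n. Q k) \<longleftrightarrow> Q 0 \<and> (\<forall>k\<le>n. Q (Suc k))" for Q :: "nat \<Rightarrow> bool"
  proof
    assume "\<forall>k\<le>Suc n. Q k" then show "Q 0 \<and> (\<forall>k\<le>n. Q (Suc k))" by auto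
  next
    assume a: "Q 0 \<and> (\<forall>k\<le>n. Q (Suc k))"
    show "\<forall>k\<le>Suc n. Q k"
    proof (intro allI impI)
      fix k assume "k \<le> Suc n" then show "Q k" using a by (cases k) auto
    qed
  qed
  show ?thesis unfolding sm_def pow_deriv gen by simp
qed

lemma smooth_deriv: "smooth_on J \<phi> \<Longrightarrow> smooth_on J (deriv \<phi>)"
  unfolding smooth_sm
proof
  fix n assume "\<forall>n. sm n J \<phi>" then have "sm (Suc n) J \<phi>" by blast
  then show "sm n J (deriv \<phi>)" unfolding sm_Suc_iff by blast
qed

lemma loc_deriv: "open S \<Longrightarrow> x \<in> S \<Longrightarrow> (\<forall>y\<in>S. v y = w y) \<Longrightarrow> deriv v x = deriv w x"
  by (rule deriv_cong_ev) (auto simp: eventually_nhds)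

lemma loc_pow: "open S \<Longrightarrow> (\<forall>y\<in>S. v y = w y) \<Longrightarrow> x \<in> S \<Longrightarrow> (deriv^^k) v x = (deriv^^k) w x"
proof (induction k arbitrary: x)
  case 0 then show ?case by simp
next
  case (Suc k)
  then show ?case using loc_deriv[of S x "(deriv^^k) v" "(deriv^^k) w"] by simp
qed

lemma loc_sm: "open S \<Longrightarrow> (\<forall>y\<in>S. v y = w y) \<Longrightarrow> sm n S v \<Longrightarrow> sm n S w"
  unfolding sm_def
proof (intro allI impI ballI)
  fix k x assume S: "open S" and e: "\<forall>y\<in>S. v y = w y" and h: "\<forall>k\<le>n. \<forall>x\<in>S. ((deriv ^^ k) v has_real_derivative (deriv ^^ Suc k) v x) (at x)"
    and k: "k \<le> n" and x: "x \<in> S"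
  have eqx: "(deriv^^Suc k) v x = (deriv^^Suc k) w x" by (rule loc_pow[OF S e x])
  have "((deriv^^k) v has_real_derivative (deriv^^Suc k) v x) (at x)" using h k x by blast
  then have "((deriv ^^ k) v has_real_derivative (deriv ^^ Suc k) w x) (at x)"
    by (simp only: eqx)
  then show "((deriv ^^ k) w has_real_derivative (deriv ^^ Suc k) w x) (at x)"
  proof (rule has_field_derivative_transform_within_open[OF _ S x])
    fix y assume "y \<in> S" then show "(deriv ^^ k) v y = (deriv ^^ k) w y" by (rule loc_pow[OF S e])
  qed
qed

lemma sm_add:
  assumes S: "open S" and v: "sm n S v" and w: "sm n S w"
  shows "sm n S (\<lambda>x. v x + w x) \<and> (\<forall>k\<le>Suc n. \<forall>x\<in>S. (deriv^^k) (\<lambda>x. v x + w x) x = (deriv^^k) v x + (deriv^^k) w x)"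
proof -
  have eq: "\<forall>x\<in>S. (deriv^^k) (\<lambda>x. v x + w x) x = (deriv^^k) v x + (deriv^^k) w x" if "k \<le> Suc n" for k
    using that
  proof (induction k)
    case 0 then show ?case by simp
  next
    case (Suc k)
    show ?case
    proof
      fix x assume x: "x \<in> S"
      have "(deriv^^Suc k) (\<lambda>x. v x + w x) x = deriv (\<lambda>y. (deriv^^k) v y + (deriv^^k) w y) x"
        using loc_deriv[OF S x, of "(deriv^^k) (\<lambda>x. v x + w x)"] Suc by simp
      also have "\<dots> = (deriv^^Suc k) v x + (deriv^^Suc k) w x"
        apply (rule DERIV_imp_deriv, rule DERIV_add)
        using v w Suc.prems x unfolding sm_def by auto
      finally show "(deriv^^Suc k) (\<lambda>x. v x + w x) x = (deriv^^Suc k) v x + (deriv^^Suc k) w x" .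
    qed
  qed
  have "sm n S (\<lambda>x. v x + w x)"
    unfolding sm_def
  proof (intro allI impI ballI)
    fix k x assume k: "k \<le> n" and x: "x \<in> S"
    have "((\<lambda>y. (deriv^^k) v y + (deriv^^k) w y) has_real_derivative (deriv^^Suc k) (\<lambda>x. v x + w x) x) (at x)"
      using eq[of "Suc k"] k x v w unfolding sm_def by (auto intro!: DERIV_add)
    then show "((deriv ^^ k) (\<lambda>x. v x + w x) has_real_derivative (deriv ^^ Suc k) (\<lambda>x. v x + w x) x) (at x)"
      by (rule has_field_derivative_transform_within_open[OF _ S x]) (use eq k in auto)
  qed
  with eq show ?thesis by blast
qed

lemma sm0_deriv: "sm 0 S u \<Longrightarrow> x \<in> S \<Longrightarrow> (u has_real_derivative deriv u x) (at x)"
  unfolding sm_def by auto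

lemma sm_mult:
  assumes S: "open S" shows "sm n S a \<Longrightarrow> sm n S b \<Longrightarrow> sm n S (\<lambda>x. a x * b x)"
proof (induction n arbitrary: a b)
  case 0
  have d: "((\<lambda>x. a x * b x) has_real_derivative deriv a x * b x + deriv b x * a x) (at x)" if "x \<in> S" for x
    by (rule DERIV_mult; rule sm0_deriv) (use 0 that in auto)
  show ?case unfolding sm_def
  proof (intro allI impI ballI)
    fix k x assume "k \<le> (0::nat)" "x \<in> S"
    then show "((deriv ^^ k) (\<lambda>x. a x * b x) has_real_derivative (deriv ^^ Suc k) (\<lambda>x. a x * b x) x) (at x)"
      using d[of x] DERIV_imp_deriv[OF d[of x]] by simp
  qed
next
  case (Suc n)
  have a0: "sm 0 S a" by (rule sm_mono[OF Suc.prems(1)]) simp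
  have b0: "sm 0 S b" by (rule sm_mono[OF Suc.prems(2)]) simp
  have d: "((\<lambda>x. a x * b x) has_real_derivative deriv a x * b x + deriv b x * a x) (at x)" if "x \<in> S" for x
    by (rule DERIV_mult; rule sm0_deriv) (use a0 b0 that in auto)
  have "sm n S (\<lambda>x. deriv a x * b x)" "sm n S (\<lambda>x. deriv b x * a x)"
  proof -
    have "sm n S (deriv a)" "sm n S (deriv b)" "sm n S a" "sm n S b"
    proof -
      show "sm n S (deriv a)" using Suc.prems(1) unfolding sm_Suc_iff by blast
      show "sm n S (deriv b)" using Suc.prems(2) unfolding sm_Suc_iff by blast
      show "sm n S a" by (rule sm_mono[OF Suc.prems(1)]) simp
      show "sm n S b" by (rule sm_mono[OF Suc.prems(2)]) simp
    qed
    then show "sm n S (\<lambda>x. deriv a x * b x)" "sm n S (\<lambda>x. deriv b x * a x)"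
      by (auto intro!: Suc.IH)
  qed
  then have sadd: "sm n S (\<lambda>x. deriv a x * b x + deriv b x * a x)" using sm_add[OF S, of n] by blast
  have "\<forall>y\<in>S. deriv a y * b y + deriv b y * a y = deriv (\<lambda>x. a x * b x) y"
  proof
    fix y assume "y \<in> S"
    from d[OF this] show "deriv a y * b y + deriv b y * a y = deriv (\<lambda>x. a x * b x) y"
      by (rule DERIV_imp_deriv[symmetric])
  qed
  from this sadd have "sm n S (deriv (\<lambda>x. a x * b x))" by (rule loc_sm[OF S])
  moreover have "sm 0 S (\<lambda>x. a x * b x)" unfolding sm_def
  proof (intro allI impI ballI)
    fix k x assume "k \<le> (0::nat)" "x \<in> S"
    then show "((deriv ^^ k) (\<lambda>x. a x * b x) has_real_derivative (deriv ^^ Suc k) (\<lambda>x. a x * b x) x) (at x)"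
      using d[of x] DERIV_imp_deriv[OF d[of x]] by simp
  qed
  ultimately show ?case unfolding sm_Suc_iff by blast
qed

lemma sm0_I: "(\<And>x. x \<in> S \<Longrightarrow> (w has_real_derivative D x) (at x)) \<Longrightarrow> sm 0 S w"
  unfolding sm_def
proof (intro allI impI ballI)
  fix k x assume d: "\<And>x. x \<in> S \<Longrightarrow> (w has_real_derivative D x) (at x)" and "k \<le> (0::nat)" "x \<in> S"
  then show "((deriv ^^ k) w has_real_derivative (deriv ^^ Suc k) w x) (at x)"
    using d[of x] DERIV_imp_deriv[OF d[of x]] by simp
qed

lemma smooth_sm0: "smooth_on J \<phi> \<Longrightarrow> sm n J \<phi>"
  unfolding smooth_sm by blast

lemma sm_comp:
  assumes S: "open S" and J: "open J" and uS: "\<forall>x\<in>S. u x \<in> J"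
  shows "sm n S u \<Longrightarrow> smooth_on J \<phi> \<Longrightarrow> sm n S (\<lambda>x. \<phi> (u x))"
proof (induction n arbitrary: \<phi>)
  case 0
  have d: "((\<lambda>x. \<phi> (u x)) has_real_derivative deriv \<phi> (u x) * deriv u x) (at x)" if "x \<in> S" for x
  proof -
    have A: "(\<phi> has_real_derivative deriv \<phi> (u x)) (at (u x))"
      using smooth_sm0[OF 0(2), of 0] uS that by (simp add: sm0_deriv)
    have B: "(u has_real_derivative deriv u x) (at x)" using 0(1) that by (rule sm0_deriv)
    show ?thesis by (rule DERIV_chain'[OF B A])
  qed
  show ?case by (rule sm0_I[OF d])
next
  case (Suc n)
  have u0: "sm 0 S u" by (rule sm_mono[OF Suc.prems(1)]) simp
  have un: "sm n S u" by (rule sm_mono[OF Suc.prems(1)]) simp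
  have un': "sm n S (deriv u)" using Suc.prems(1) unfolding sm_Suc_iff by blast
  have d: "((\<lambda>x. \<phi> (u x)) has_real_derivative deriv \<phi> (u x) * deriv u x) (at x)" if "x \<in> S" for x
  proof -
    have A: "(\<phi> has_real_derivative deriv \<phi> (u x)) (at (u x))"
      using smooth_sm0[OF Suc.prems(2), of 0] uS that by (simp add: sm0_deriv)
    have B: "(u has_real_derivative deriv u x) (at x)" using u0 that by (rule sm0_deriv)
    show ?thesis by (rule DERIV_chain'[OF B A])
  qed
  have "sm n S (\<lambda>x. deriv \<phi> (u x))" by (rule Suc.IH[OF un smooth_deriv[OF Suc.prems(2)]])
  then have sp: "sm n S (\<lambda>x. deriv \<phi> (u x) * deriv u x)" by (rule sm_mult[OF S _ un'])
  have "\<forall>y\<in>S. deriv \<phi> (u y) * deriv u y = deriv (\<lambda>x. \<phi> (u x)) y"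
  proof
    fix y assume "y \<in> S"
    from d[OF this] show "deriv \<phi> (u y) * deriv u y = deriv (\<lambda>x. \<phi> (u x)) y"
      by (rule DERIV_imp_deriv[symmetric])
  qed
  from this sp have "sm n S (deriv (\<lambda>x. \<phi> (u x)))" by (rule loc_sm[OF S])
  with sm0_I[OF d] show ?case unfolding sm_Suc_iff by blast
qed

lemma smooth_comp:
  assumes "open S" "open J" "\<forall>x\<in>S. u x \<in> J" "smooth_on S u" "smooth_on J \<phi>"
  shows "smooth_on S (\<lambda>x. \<phi> (u x))"
  unfolding smooth_sm
proof
  fix n show "sm n S (\<lambda>x. \<phi> (u x))"
    using sm_comp[OF assms(1-3) smooth_sm0[OF assms(4)] assms(5)] .
qed

lemma smooth_mult:
  assumes "open S" "smooth_on S a" "smooth_on S b"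
  shows "smooth_on S (\<lambda>x. a x * b x)"
  unfolding smooth_sm
proof
  fix n show "sm n S (\<lambda>x. a x * b x)"
    by (rule sm_mult[OF assms(1) smooth_sm0[OF assms(2)] smooth_sm0[OF assms(3)]])
qed

lemma deriv_mult_eq:
  assumes "smooth_on S a" "smooth_on S b" "y \<in> S"
  shows "deriv (\<lambda>x. a x * b x) y = deriv a y * b y + a y * deriv b y"
proof -
  have "((\<lambda>x. a x * b x) has_real_derivative deriv a y * b y + deriv b y * a y) (at y)"
    by (rule DERIV_mult; rule sm0_deriv) (use smooth_sm0[OF assms(1)] smooth_sm0[OF assms(2)] assms(3) in auto)
  from DERIV_imp_deriv[OF this] show ?thesis by (simp add: mult.commute)
qed

lemma sign_mult:
  assumes S: "open S"
  shows "smooth_on S a \<Longrightarrow> smooth_on S b \<Longrightarrow>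
    (\<forall>j\<le>m. \<forall>x\<in>S. 0 < (-1)^(j+p) * (deriv^^j) a x) \<Longrightarrow>
    (\<forall>j\<le>m. \<forall>x\<in>S. 0 < (-1)^(j+q) * (deriv^^j) b x) \<Longrightarrow> x \<in> S \<Longrightarrow>
    0 < (-1)^(m+p+q) * (deriv^^m) (\<lambda>x. a x * b x) x"
proof (induction m arbitrary: a b p q x)
  case 0
  have A: "0 < (-1)^p * a x" using "0.prems"(3) "0.prems"(5) by auto
  have B: "0 < (-1)^q * b x" using "0.prems"(4) "0.prems"(5) by auto
  have "0 < ((-1)^p * a x) * ((-1)^q * b x)" by (rule mult_pos_pos[OF A B])
  then show ?case by (simp add: power_add algebra_simps)
next
  case (Suc m)
  have sa': "smooth_on S (deriv a)" by (rule smooth_deriv[OF Suc.prems(1)])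
  have sb': "smooth_on S (deriv b)" by (rule smooth_deriv[OF Suc.prems(2)])
  have s1: "smooth_on S (\<lambda>x. deriv a x * b x)" by (rule smooth_mult[OF S sa' Suc.prems(2)])
  have s2: "smooth_on S (\<lambda>x. a x * deriv b x)" by (rule smooth_mult[OF S Suc.prems(1) sb'])
  have eq: "\<forall>y\<in>S. deriv (\<lambda>x. a x * b x) y = deriv a y * b y + a y * deriv b y"
    using deriv_mult_eq[OF Suc.prems(1,2)] by blast
  have "(deriv^^Suc m) (\<lambda>x. a x * b x) x = (deriv^^m) (deriv (\<lambda>x. a x * b x)) x"
    by (simp only: pow_deriv)
  also have "\<dots> = (deriv^^m) (\<lambda>y. deriv a y * b y + a y * deriv b y) x"
    by (rule loc_pow[OF S eq Suc.prems(5)])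
  also have "\<dots> = (deriv^^m) (\<lambda>y. deriv a y * b y) x + (deriv^^m) (\<lambda>y. a y * deriv b y) x"
    using sm_add[OF S smooth_sm0[OF s1, of m] smooth_sm0[OF s2, of m]] Suc.prems(5) by auto
  finally have e: "(deriv^^Suc m) (\<lambda>x. a x * b x) x = (deriv^^m) (\<lambda>y. deriv a y * b y) x + (deriv^^m) (\<lambda>y. a y * deriv b y) x" .
  have h1: "0 < (-1)^(m + Suc p + q) * (deriv^^m) (\<lambda>y. deriv a y * b y) x"
  proof (rule Suc.IH[OF sa' Suc.prems(2) _ _ Suc.prems(5)])
    show "\<forall>j\<le>m. \<forall>x\<in>S. 0 < (- 1) ^ (j + Suc p) * (deriv ^^ j) (deriv a) x"
    proof (intro allI impI ballI)
      fix j y assume "j \<le> m" "y \<in> S"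
      then have "0 < (-1)^(Suc j + p) * (deriv^^Suc j) a y" using Suc.prems(3) by auto
      then show "0 < (- 1) ^ (j + Suc p) * (deriv ^^ j) (deriv a) y" by (simp add: pow_deriv)
    qed
    show "\<forall>j\<le>m. \<forall>x\<in>S. 0 < (- 1) ^ (j + q) * (deriv ^^ j) b x" using Suc.prems(4) by auto
  qed
  have h2: "0 < (-1)^(m + p + Suc q) * (deriv^^m) (\<lambda>y. a y * deriv b y) x"
  proof (rule Suc.IH[OF Suc.prems(1) sb' _ _ Suc.prems(5)])
    show "\<forall>j\<le>m. \<forall>x\<in>S. 0 < (- 1) ^ (j + Suc q) * (deriv ^^ j) (deriv b) x"
    proof (intro allI impI ballI)
      fix j y assume "j \<le> m" "y \<in> S"
      then have "0 < (-1)^(Suc j + q) * (deriv^^Suc j) b y" using Suc.prems(4) by auto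
      then show "0 < (- 1) ^ (j + Suc q) * (deriv ^^ j) (deriv b) y" by (simp add: pow_deriv)
    qed
    show "\<forall>j\<le>m. \<forall>x\<in>S. 0 < (- 1) ^ (j + p) * (deriv ^^ j) a x" using Suc.prems(3) by auto
  qed
  have "(-1)^(Suc m + p + q) * (deriv^^Suc m) (\<lambda>x. a x * b x) x =
     (-1)^(m + Suc p + q) * (deriv^^m) (\<lambda>y. deriv a y * b y) x + (-1)^(m + p + Suc q) * (deriv^^m) (\<lambda>y. a y * deriv b y) x"
    unfolding e by (simp add: algebra_simps)
  with h1 h2 show ?case by linarith
qed


lemma deriv_comp_eq:
  assumes "smooth_on S u" "smooth_on J \<phi>" "\<forall>x\<in>S. u x \<in> J" "y \<in> S"
  shows "deriv (\<lambda>x. \<phi> (u x)) y = deriv \<phi> (u y) * deriv u y"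
proof -
  have A: "(\<phi> has_real_derivative deriv \<phi> (u y)) (at (u y))"
    using smooth_sm0[OF assms(2), of 0] assms(3,4) by (simp add: sm0_deriv)
  have B: "(u has_real_derivative deriv u y) (at y)" using smooth_sm0[OF assms(1), of 0] assms(4) by (rule sm0_deriv)
  show ?thesis by (rule DERIV_imp_deriv[OF DERIV_chain'[OF B A]])
qed

lemma sign_comp:
  assumes S: "open S" and J: "open J" and uS: "\<forall>x\<in>S. u x \<in> J" and su: "smooth_on S u"
  shows "smooth_on J \<phi> \<Longrightarrow> (\<forall>k. \<forall>y\<in>J. 0 < (-1)^(k+p) * (deriv^^k) \<phi> y) \<Longrightarrow>
    (\<forall>k<n. \<forall>x\<in>S. 0 < (-1)^k * (deriv^^k) (deriv u) x) \<Longrightarrow> x \<in> S \<Longrightarrow>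
    0 < (-1)^(n+p) * (deriv^^n) (\<lambda>x. \<phi> (u x)) x"
proof (induction n arbitrary: \<phi> p x rule: less_induct)
  case (less n)
  show ?case
  proof (cases n)
    case 0
    have "u x \<in> J" using uS less.prems(4) by blast
    then show ?thesis using less.prems(2)[rule_format, of "u x" 0] 0 by simp
  next
    case (Suc m)
    have sp': "smooth_on J (deriv \<phi>)" by (rule smooth_deriv[OF less.prems(1)])
    have su': "smooth_on S (deriv u)" by (rule smooth_deriv[OF su])
    have sa: "smooth_on S (\<lambda>y. deriv \<phi> (u y))" by (rule smooth_comp[OF S J uS su sp'])
    have eq: "\<forall>y\<in>S. deriv (\<lambda>x. \<phi> (u x)) y = deriv \<phi> (u y) * deriv u y"
      using deriv_comp_eq[OF su less.prems(1) uS] by blast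
    have "(deriv^^Suc m) (\<lambda>x. \<phi> (u x)) x = (deriv^^m) (deriv (\<lambda>x. \<phi> (u x))) x"
      by (simp only: pow_deriv)
    also have "\<dots> = (deriv^^m) (\<lambda>y. deriv \<phi> (u y) * deriv u y) x"
      by (rule loc_pow[OF S eq less.prems(4)])
    finally have e: "(deriv^^Suc m) (\<lambda>x. \<phi> (u x)) x = (deriv^^m) (\<lambda>y. deriv \<phi> (u y) * deriv u y) x" .
    have "0 < (-1)^(m + Suc p + 0) * (deriv^^m) (\<lambda>y. deriv \<phi> (u y) * deriv u y) x"
    proof (rule sign_mult[OF S sa su' _ _ less.prems(4)])
      show "\<forall>j\<le>m. \<forall>x\<in>S. 0 < (- 1) ^ (j + Suc p) * (deriv ^^ j) (\<lambda>y. deriv \<phi> (u y)) x"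
      proof (intro allI impI ballI)
        fix j y assume j: "j \<le> m" and y: "y \<in> S"
        have jn: "j < n" using j Suc by simp
        show "0 < (- 1) ^ (j + Suc p) * (deriv ^^ j) (\<lambda>y. deriv \<phi> (u y)) y"
        proof (rule less.IH[OF jn sp' _ _ y])
          show "\<forall>k. \<forall>y\<in>J. 0 < (- 1) ^ (k + Suc p) * (deriv ^^ k) (deriv \<phi>) y"
          proof (intro allI ballI)
            fix k z assume "z \<in> J"
            then have "0 < (-1)^(Suc k + p) * (deriv^^Suc k) \<phi> z" using less.prems(2) by blast
            then show "0 < (- 1) ^ (k + Suc p) * (deriv ^^ k) (deriv \<phi>) z" by (simp add: pow_deriv)
          qed
          show "\<forall>k<j. \<forall>x\<in>S. 0 < (- 1) ^ k * (deriv ^^ k) (deriv u) x"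
            using less.prems(3) jn by auto
        qed
      qed
      show "\<forall>j\<le>m. \<forall>x\<in>S. 0 < (- 1) ^ (j + 0) * (deriv ^^ j) (deriv u) x"
        using less.prems(3) Suc by auto
    qed
    then show ?thesis unfolding Suc e by simp
  qed
qed

lemma inv_formula_deriv:
  fixes t :: real assumes "0 < t"
  shows "((\<lambda>s. (-1)^k * fact k / s^(Suc k)) has_real_derivative (-1)^Suc k * fact (Suc k) / t^(Suc (Suc k))) (at t)"
  using assms
  apply (auto intro!: derivative_eq_intros simp: field_simps)
  by (metis Suc_pred power_Suc neq0_conv)

lemma inv_pow:
  fixes t :: real assumes "0 < t"
  shows "(deriv^^k) (\<lambda>t. 1 / t) t = (-1)^k * fact k / t^(Suc k)"
  using assms
proof (induction k arbitrary: t)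
  case 0 then show ?case by simp
next
  case (Suc k)
  have "(deriv^^Suc k) (\<lambda>t. 1 / t) t = deriv ((deriv^^k) (\<lambda>t. 1 / t)) t" by simp
  also have "\<dots> = deriv (\<lambda>s. (-1)^k * fact k / s^(Suc k)) t"
    by (rule loc_deriv[of "{0<..}"]) (use Suc in auto)
  also have "\<dots> = (-1)^Suc k * fact (Suc k) / t^(Suc (Suc k))"
  proof (rule DERIV_imp_deriv)
    show "((\<lambda>s. (-1)^k * fact k / s^(Suc k)) has_real_derivative (-1)^Suc k * fact (Suc k) / t^(Suc (Suc k))) (at t)"
      using Suc.prems
      apply (auto intro!: derivative_eq_intros simp: field_simps)
      by (metis Suc_pred power_Suc neq0_conv)
  qed
  finally show ?case .
qed


lemma inv_smooth: "smooth_on {0<..} (\<lambda>t::real. 1 / t)"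
  unfolding smooth_on_def
proof (intro allI impI)
  fix n and t :: real assume "t \<in> {0<..}"
  then have t: "0 < t" by simp
  have "((\<lambda>s. (-1)^n * fact n / s^(Suc n)) has_real_derivative (deriv ^^ Suc n) (\<lambda>t. 1 / t) t) (at t)"
    using inv_formula_deriv[OF t, of n] inv_pow[OF t, of "Suc n"] by simp
  then show "((deriv ^^ n) (\<lambda>t. 1 / t) has_real_derivative (deriv ^^ Suc n) (\<lambda>t. 1 / t) t) (at t)"
  proof (rule has_field_derivative_transform_within_open[of _ _ _ "{0<..}"])
    fix y :: real assume "y \<in> {0<..}"
    then show "(-1)^n * fact n / y^(Suc n) = (deriv ^^ n) (\<lambda>t. 1 / t) y" using inv_pow[of y n] by simp
  qed (use t in auto)
qed

lemma inv_sign: "\<forall>k. \<forall>y\<in>{0<..}. 0 < (-1)^(k+0) * (deriv^^k) (\<lambda>t::real. 1 / t) y"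
proof (intro allI ballI)
  fix k and y :: real assume "y \<in> {0<..}"
  then have y: "0 < y" by simp
  have "(-1)^(k+0) * (deriv^^k) (\<lambda>t::real. 1 / t) y = fact k / y^(Suc k)"
    using inv_pow[OF y, of k] by (simp add: power_mult_distrib[symmetric])
  also have "\<dots> > 0" using y by simp
  finally show "0 < (-1)^(k+0) * (deriv^^k) (\<lambda>t::real. 1 / t) y" .
qed

lemma pos_of: "0 \<le> c * X \<Longrightarrow> X \<noteq> 0 \<Longrightarrow> (c::real) \<noteq> 0 \<Longrightarrow> 0 < c * X"
  by (simp add: less_le)

theorem lemma4p1:
  fixes f :: "real \<Rightarrow> real"
  assumes "f ` {0<..} \<subseteq> {0<..}"
    and "smooth_on {0<..} f"
    and "bernstein (deriv f)"
    and "\<forall>n::nat. n \<ge> 1 \<longrightarrow> (\<forall>x>0. (deriv ^^ n) f x \<noteq> 0)"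
  shows "bernstein_on (f ` {0<..}) (inv_into {0<..} f) \<and>
    (\<forall>n::nat. n \<ge> 1 \<longrightarrow> (\<forall>y \<in> f ` {0<..}. (deriv ^^ n) (inv_into {0<..} f) y \<noteq> 0))"
proof -
  define g where "g = inv_into {0<..} f"
  define T where "T = f ` {0<..}"
  define \<phi> where "\<phi> = (\<lambda>x. 1 / deriv f x)"
  have oS: "open ({0<..} :: real set)" by simp
  have sf: "smooth_on {0<..} f" by (rule assms(2))
  have bh: "bernstein_on {0<..} (deriv f)" using assms(3) unfolding bernstein_def .
  have hpos: "\<forall>x\<in>{0<..}. deriv f x \<in> {0<..}"
  proof
    fix x :: real assume x: "x \<in> {0<..}"
    have "0 \<le> deriv f x" using bh x unfolding bernstein_on_def by blast
    moreover have "deriv f x \<noteq> 0" using assms(4)[rule_format, of 1 x] x by simp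
    ultimately show "deriv f x \<in> {0<..}" by simp
  qed
  have sh: "smooth_on {0<..} (deriv f)" by (rule smooth_deriv[OF sf])
  have hs: "\<forall>k. \<forall>x\<in>{0<..}. 0 < (-1)^k * (deriv^^k) (deriv (deriv f)) x"
  proof (intro allI ballI)
    fix k and x :: real assume x: "x \<in> {0<..}"
    have bb: "\<forall>n\<ge>1. \<forall>x\<in>{0<..}. 0 \<le> (- 1) ^ (n - 1) * (deriv ^^ n) (deriv f) x"
      using bh unfolding bernstein_on_def by blast
    have "0 \<le> (-1)^(Suc k - 1) * (deriv^^Suc k) (deriv f) x"
      by (rule bb[rule_format]) (use x in auto)
    then have ge: "0 \<le> (-1)^k * (deriv^^Suc k) (deriv f) x" by (simp only: diff_Suc_1)
    have "(deriv^^Suc (Suc k)) f x \<noteq> 0" by (rule assms(4)[rule_format]) (use x in auto)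
    then have nz: "(deriv^^Suc k) (deriv f) x \<noteq> 0" by (simp only: pow_deriv not_False_eq_True)
    have "0 < (-1)^k * (deriv^^Suc k) (deriv f) x" by (rule pos_of[OF ge nz]) simp
    then show "0 < (-1)^k * (deriv^^k) (deriv (deriv f)) x" by (simp only: pow_deriv)
  qed
  have s\<phi>: "smooth_on {0<..} \<phi>"
    using smooth_comp[OF oS oS hpos sh inv_smooth] unfolding \<phi>_def .
  have \<phi>s: "\<forall>k. \<forall>x\<in>{0<..}. 0 < (-1)^(k+0) * (deriv^^k) \<phi> x"
  proof (intro allI ballI)
    fix k and x :: real assume x: "x \<in> {0<..}"
    have "\<forall>j<k. \<forall>x\<in>{0<..}. 0 < (-1)^j * (deriv^^j) (deriv (deriv f)) x" using hs by blast
    from sign_comp[OF oS oS hpos sh inv_smooth inv_sign this x]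
    show "0 < (-1)^(k+0) * (deriv^^k) \<phi> x" unfolding \<phi>_def .
  qed
  have fd: "(f has_real_derivative deriv f x) (at x)" if "x \<in> {0<..}" for x
    using smooth_sm0[OF sf, of 0] that by (rule sm0_deriv)
  have mono: "f x < f y" if "0 < x" "x < y" for x y
  proof (rule DERIV_pos_imp_increasing[OF that(2)])
    fix z assume "x \<le> z" "z \<le> y"
    then have z: "z \<in> {0<..}" using that by auto
    show "\<exists>D. (f has_real_derivative D) (at z) \<and> D > 0"
      using fd[OF z] hpos z by auto
  qed
  have inj: "inj_on f {0<..}"
  proof (rule inj_onI)
    fix x y :: real assume "x \<in> {0<..}" "y \<in> {0<..}" "f x = f y"
    then show "x = y" using mono[of x y] mono[of y x] by (cases x y rule: linorder_cases) auto
  qed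
  have gf: "g (f z) = z" if "z \<in> {0<..}" for z
    unfolding g_def using inv_into_f_f[OF inj that] .
  have cont: "continuous_on {0<..} f"
    by (rule continuous_at_imp_continuous_on) (use fd DERIV_isCont in blast)
  have oT: "open T" unfolding T_def
    by (rule injective_into_1d_imp_open_map_UNIV[OF oS cont inj subset_refl])
  have gT: "\<forall>y\<in>T. g y \<in> {0<..}" unfolding T_def using gf by auto
  have fg: "f (g y) = y" if "y \<in> T" for y
    using that unfolding g_def T_def by (auto intro: f_inv_into_f)
  have gd: "(g has_real_derivative \<phi> (g y)) (at y)" if y: "y \<in> T" for y
  proof -
    have gy: "g y \<in> {0<..}" using gT y by blast
    have "(g has_real_derivative inverse (deriv f (g y))) (at y)"
      by (rule has_field_derivative_inverse_strong_x[OF fd[OF gy] _ oS cont gy fg[OF y] gf])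
         (use hpos gy in force)
    then show ?thesis unfolding \<phi>_def by (simp add: inverse_eq_divide)
  qed
  have dg: "\<forall>y\<in>T. \<phi> (g y) = deriv g y"
  proof
    fix y assume "y \<in> T" from DERIV_imp_deriv[OF gd[OF this]] show "\<phi> (g y) = deriv g y" by simp
  qed
  have smg: "sm n T g" for n
  proof (induction n)
    case 0 show ?case by (rule sm0_I[OF gd])
  next
    case (Suc n)
    have "sm n T (\<lambda>y. \<phi> (g y))" by (rule sm_comp[OF oT oS gT Suc.IH s\<phi>])
    with dg have "sm n T (deriv g)" by (rule loc_sm[OF oT])
    with sm0_I[OF gd] show ?case unfolding sm_Suc_iff by blast
  qed
  have sg: "smooth_on T g" unfolding smooth_sm using smg by blast
  have gs: "\<forall>y\<in>T. 0 < (-1)^n * (deriv^^n) (deriv g) y" for n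
  proof (induction n rule: less_induct)
    case (less n)
    show ?case
    proof
      fix y assume y: "y \<in> T"
      have "\<forall>k<n. \<forall>x\<in>T. 0 < (-1)^k * (deriv^^k) (deriv (\<lambda>x. g x)) x" using less.IH by simp
      from sign_comp[OF oT oS gT sg s\<phi> \<phi>s this y]
      have "0 < (-1)^n * (deriv^^n) (\<lambda>x. \<phi> (g x)) y" by simp
      moreover have "(deriv^^n) (\<lambda>x. \<phi> (g x)) y = (deriv^^n) (deriv g) y"
        by (rule loc_pow[OF oT dg y])
      ultimately show "0 < (-1)^n * (deriv^^n) (deriv g) y" by simp
    qed
  qed
  have main: "0 < (-1)^(n - 1) * (deriv^^n) g y" if "n \<ge> 1" "y \<in> T" for n y
  proof -
    define m where "m = n - 1"
    have n: "n = Suc m" using that(1) unfolding m_def by simp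
    have e: "(deriv^^n) g y = (deriv^^m) (deriv g) y" unfolding n by (simp only: pow_deriv)
    have pos: "0 < (-1)^m * (deriv^^m) (deriv g) y" using gs[of m] that(2) by blast
    have nm: "n - 1 = m" unfolding m_def ..
    show ?thesis unfolding e nm by (rule pos)
  qed
  have "bernstein_on T g"
    unfolding bernstein_on_def
  proof (intro conjI sg ballI allI impI)
    fix y assume "y \<in> T" then show "0 \<le> g y" using gT by auto
  next
    fix n :: nat and y assume "1 \<le> n" "y \<in> T"
    from main[OF this] show "0 \<le> (-1)^(n - 1) * (deriv^^n) g y" by simp
  qed
  moreover have "\<forall>n::nat. n \<ge> 1 \<longrightarrow> (\<forall>y \<in> T. (deriv ^^ n) g y \<noteq> 0)"
  proof (intro allI impI ballI)
    fix n :: nat and y assume "1 \<le> n" "y \<in> T"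
    from main[OF this] show "(deriv ^^ n) g y \<noteq> 0" by auto
  qed
  ultimately show ?thesis unfolding g_def T_def by blast
qed

end
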